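(* Let $M,N$ be smooth manifolds and let $\{f_s:M\to N\}_{s\in[0,1]}$ be a (smooth) homotopy through submersions. Suppose there is a compact set $K\subset M$ such that $f_s=f_0$ on $M\setminus K$ for all $s$. Then there exists $\varepsilon>0$ such that $f_s(M)=f_0(M)$ for all $s\in[0,\varepsilon]$. *)

theory Defs
  imports "HOL-Analysis.Analysis"
begin

fun iter_dderiv :: "'a::real_normed_vector list \<Rightarrow> ('a \<Rightarrow> 'b::real_normed_vector) \<Rightarrow> 'a \<Rightarrow> 'b" where
  "iter_dderiv [] g = g"
| "iter_dderiv (v # vs) g = (\<lambda>x. frechet_derivative (iter_dderiv vs g) (at x) v)"

definition smooth_on :: "'a::euclidean_space set \<Rightarrow> ('a \<Rightarrow> 'b::real_normed_vector) \<Rightarrow> bool" where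
  "smooth_on S g \<longleftrightarrow> (\<forall>vs. iter_dderiv vs g differentiable_on S)"

definition is_chart :: "'a topology \<Rightarrow> 'a set \<Rightarrow> ('a \<Rightarrow> 'e::euclidean_space) \<Rightarrow> bool" where
  "is_chart T U \<phi> \<longleftrightarrow> openin T U \<and> open (\<phi> ` U) \<and>
     homeomorphic_map (subtopology T U) (top_of_set (\<phi> ` U)) \<phi>"

definition smooth_manifold :: "'a topology \<Rightarrow> ('a set \<times> ('a \<Rightarrow> 'e::euclidean_space)) set \<Rightarrow> bool" where
  "smooth_manifold T A \<longleftrightarrow>
     Hausdorff_space T \<and> second_countable T \<and>
     (\<forall>(U, \<phi>) \<in> A. is_chart T U \<phi>) \<and>
     (\<forall>x \<in> topspace T. \<exists>(U, \<phi>) \<in> A. x \<in> U) \<and>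
     (\<forall>(U, \<phi>) \<in> A. \<forall>(V, \<psi>) \<in> A. smooth_on (\<phi> ` (U \<inter> V)) (\<psi> \<circ> inv_into U \<phi>))"

definition smooth_map ::
  "'a topology \<Rightarrow> ('a set \<times> ('a \<Rightarrow> 'e::euclidean_space)) set \<Rightarrow>
   'b topology \<Rightarrow> ('b set \<times> ('b \<Rightarrow> 'f::euclidean_space)) set \<Rightarrow> ('a \<Rightarrow> 'b) \<Rightarrow> bool" where
  "smooth_map T A T' B g \<longleftrightarrow> continuous_map T T' g \<and>
     (\<forall>(U, \<phi>) \<in> A. \<forall>(V, \<psi>) \<in> B.
        smooth_on (\<phi> ` (U \<inter> g -` V)) (\<psi> \<circ> g \<circ> inv_into U \<phi>))"

definition submersion ::
  "'a topology \<Rightarrow> ('a set \<times> ('a \<Rightarrow> 'e::euclidean_space)) set \<Rightarrow>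
   'b topology \<Rightarrow> ('b set \<times> ('b \<Rightarrow> 'f::euclidean_space)) set \<Rightarrow> ('a \<Rightarrow> 'b) \<Rightarrow> bool" where
  "submersion T A T' B g \<longleftrightarrow> smooth_map T A T' B g \<and>
     (\<forall>x \<in> topspace T. \<forall>(U, \<phi>) \<in> A. \<forall>(V, \<psi>) \<in> B. x \<in> U \<longrightarrow> g x \<in> V \<longrightarrow>
        (\<exists>D. ((\<psi> \<circ> g \<circ> inv_into U \<phi>) has_derivative D) (at (\<phi> x)) \<and> surj D))"

text \<open>Smooth homotopy [0,1] \<times> M \<rightarrow> N, (s,x) \<mapsto> f s x: continuous, and in
  charts locally the restriction of a smooth map defined on an open subset of
  \<real> \<times> \<real>^m (the usual notion of smoothness on a manifold with boundary).\<close>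
definition smooth_homotopy ::
  "'a topology \<Rightarrow> ('a set \<times> ('a \<Rightarrow> 'e::euclidean_space)) set \<Rightarrow>
   'b topology \<Rightarrow> ('b set \<times> ('b \<Rightarrow> 'f::euclidean_space)) set \<Rightarrow> (real \<Rightarrow> 'a \<Rightarrow> 'b) \<Rightarrow> bool" where
  "smooth_homotopy T A T' B f \<longleftrightarrow>
     continuous_map (prod_topology (top_of_set {0..1}) T) T' (\<lambda>(s, x). f s x) \<and>
     (\<forall>(U, \<phi>) \<in> A. \<forall>(V, \<psi>) \<in> B. \<forall>s x. s \<in> {0..1} \<and> x \<in> U \<and> f s x \<in> V \<longrightarrow>
        (\<exists>W H. open W \<and> (s, \<phi> x) \<in> W \<and> smooth_on W (H :: real \<times> 'e \<Rightarrow> 'f) \<and>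
           (\<forall>(t, y) \<in> W. t \<in> {0..1} \<and> y \<in> \<phi> ` U \<and> f t (inv_into U \<phi> y) \<in> V \<longrightarrow>
              H (t, y) = \<psi> (f t (inv_into U \<phi> y)))))"

end

theory Submission
  imports Defs
begin

lemma homeo_inv_cont:
  assumes "homeomorphic_map X Y f"
  shows "continuous_map Y X (inv_into (topspace X) f)"
proof -
  obtain g where g: "homeomorphic_maps X Y f g" using assms homeomorphic_map_maps by blast
  then have c: "continuous_map Y X g" and fg: "\<forall>y\<in>topspace Y. f (g y) = y"
    and gt: "\<forall>y\<in>topspace Y. g y \<in> topspace X"
    by (auto simp: homeomorphic_maps_def continuous_map_def)
  have inj: "inj_on f (topspace X)" using assms homeomorphic_eq_everything_map by blast
  show ?thesis
  proof (rule continuous_map_eq[OF c])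
    fix y assume "y \<in> topspace Y"
    then show "g y = inv_into (topspace X) f y"
      using fg gt inj by (metis inv_into_f_f)
  qed
qed

lemma compact_uniform:
  fixes Q :: "real \<Rightarrow> 'a \<Rightarrow> bool"
  assumes "compactin X K"
    and "\<And>x. x \<in> K \<Longrightarrow> \<exists>N d. openin X N \<and> x \<in> N \<and> d > 0 \<and> (\<forall>s. 0 \<le> s \<and> s < d \<longrightarrow> (\<forall>y\<in>N. Q s y))"
  shows "\<exists>e>0. \<forall>s. 0 \<le> s \<and> s < e \<longrightarrow> (\<forall>y\<in>K. Q s y)"
proof -
  obtain N d where Nd: "\<And>x. x \<in> K \<Longrightarrow> openin X (N x) \<and> x \<in> N x \<and> d x > 0 \<and> (\<forall>s. 0 \<le> s \<and> s < d x \<longrightarrow> (\<forall>y\<in>N x. Q s y))"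
    using assms(2) by metis
  have "K \<subseteq> \<Union> (N ` K)" using Nd by blast
  moreover have "\<forall>B\<in>N ` K. openin X B" using Nd by blast
  ultimately obtain F where F: "finite F" "F \<subseteq> N ` K" "K \<subseteq> \<Union> F"
    using assms(1) unfolding compactin_def by meson
  then obtain K' where K': "K' \<subseteq> K" "finite K'" "F = N ` K'"
    by (meson finite_subset_image)
  show ?thesis
  proof (cases "K' = {}")
    case True
    then have "K = {}" using F K' by auto
    then show ?thesis by (intro exI[of _ 1]) auto
  next
    case False
    define e where "e = Min (d ` K')"
    have "e > 0" unfolding e_def using False K' Nd by (subst Min_gr_iff) auto
    moreover have "\<forall>s. 0 \<le> s \<and> s < e \<longrightarrow> (\<forall>y\<in>K. Q s y)"
    proof (intro allI impI ballI)
      fix s y assume s: "0 \<le> s \<and> s < e" and y: "y \<in> K"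
      then obtain x where x: "x \<in> K'" "y \<in> N x" using F K' by auto
      have "e \<le> d x" unfolding e_def using x K' by simp
      then show "Q s y" using Nd[of x] x K' s by auto
    qed
    ultimately show ?thesis by blast
  qed
qed

lemma local_open:
  fixes T :: "'a topology" and A :: "('a set \<times> ('a \<Rightarrow> 'm::euclidean_space)) set"
    and T' :: "'b topology" and B :: "('b set \<times> ('b \<Rightarrow> 'n::euclidean_space)) set"
    and f :: "real \<Rightarrow> 'a \<Rightarrow> 'b"
  assumes man: "smooth_manifold T A" and man': "smooth_manifold T' B"
    and hom: "smooth_homotopy T A T' B f"
    and sub: "submersion T A T' B (f 0)"
    and x0: "x0 \<in> topspace T"
  shows "\<exists>r>0. \<exists>Ob. openin T' Ob \<and> f 0 x0 \<in> Ob \<and>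
           (\<forall>s. 0 \<le> s \<and> s < r \<and> s \<le> 1 \<longrightarrow> Ob \<subseteq> f s ` topspace T)"
proof -
  obtain U \<phi> where U: "(U, \<phi>) \<in> A" "x0 \<in> U"
    using man x0 unfolding smooth_manifold_def by blast
  have cont: "continuous_map (prod_topology (top_of_set {0..1}) T) T' (\<lambda>(s, x). f s x)"
    using hom unfolding smooth_homotopy_def by blast
  have f0x0: "f 0 x0 \<in> topspace T'"
    using continuous_map_image_subset_topspace[OF cont] x0 by force
  obtain V \<psi> where V: "(V, \<psi>) \<in> B" "f 0 x0 \<in> V"
    using man' f0x0 unfolding smooth_manifold_def by blast
  have chU: "is_chart T U \<phi>" using man U unfolding smooth_manifold_def by blast
  have chV: "is_chart T' V \<psi>" using man' V unfolding smooth_manifold_def by blast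
  have Uo: "openin T U" and phiUo: "open (\<phi> ` U)"
    and hU: "homeomorphic_map (subtopology T U) (top_of_set (\<phi> ` U)) \<phi>"
    using chU unfolding is_chart_def by auto
  have Vo: "openin T' V" and psiVo: "open (\<psi> ` V)"
    and hV: "homeomorphic_map (subtopology T' V) (top_of_set (\<psi> ` V)) \<psi>"
    using chV unfolding is_chart_def by auto
  have tU: "topspace (subtopology T U) = U" using openin_subset[OF Uo] by auto
  have tV: "topspace (subtopology T' V) = V" using openin_subset[OF Vo] by auto
  have injU: "inj_on \<phi> U" using hU unfolding homeomorphic_eq_everything_map tU by blast
  have injV: "inj_on \<psi> V" using hV unfolding homeomorphic_eq_everything_map tV by blast
  obtain D where D: "((\<psi> \<circ> f 0 \<circ> inv_into U \<phi>) has_derivative D) (at (\<phi> x0))" "surj D"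
    using sub x0 U V unfolding submersion_def by blast
  obtain W and H :: "real \<times> 'm \<Rightarrow> 'n" where W: "open W" "(0, \<phi> x0) \<in> W" "smooth_on W H"
    and agree: "\<forall>(t, y) \<in> W. t \<in> {0..1} \<and> y \<in> \<phi> ` U \<and> f t (inv_into U \<phi> y) \<in> V \<longrightarrow>
              H (t, y) = \<psi> (f t (inv_into U \<phi> y))"
  proof -
    have "\<forall>(U, \<phi>) \<in> A. \<forall>(V, \<psi>) \<in> B. \<forall>s x. s \<in> {0..1} \<and> x \<in> U \<and> f s x \<in> V \<longrightarrow>
        (\<exists>W H. open W \<and> (s, \<phi> x) \<in> W \<and> smooth_on W (H :: real \<times> 'm \<Rightarrow> 'n) \<and>
           (\<forall>(t, y) \<in> W. t \<in> {0..1} \<and> y \<in> \<phi> ` U \<and> f t (inv_into U \<phi> y) \<in> V \<longrightarrow>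
              H (t, y) = \<psi> (f t (inv_into U \<phi> y))))"
      using hom unfolding smooth_homotopy_def by blast
    then have "\<exists>W H. open W \<and> (0, \<phi> x0) \<in> W \<and> smooth_on W (H :: real \<times> 'm \<Rightarrow> 'n) \<and>
           (\<forall>(t, y) \<in> W. t \<in> {0..1} \<and> y \<in> \<phi> ` U \<and> f t (inv_into U \<phi> y) \<in> V \<longrightarrow>
              H (t, y) = \<psi> (f t (inv_into U \<phi> y)))"
      using U V by fastforce
    then show ?thesis using that by blast
  qed
  have Hdiff: "H differentiable_on W"
    using W(3) unfolding smooth_on_def by (metis iter_dderiv.simps(1))
  then obtain DH where DH: "(H has_derivative DH) (at (0, \<phi> x0))"
    using W by (metis at_within_open differentiable_def differentiable_on_def)
  have Hcont: "continuous_on W H" using Hdiff differentiable_imp_continuous_on by blast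
  have blDH: "bounded_linear DH" using DH has_derivative_bounded_linear by blast
  have lDH: "linear DH" using blDH linear_conv_bounded_linear by blast
  have invc: "continuous_map (top_of_set (\<phi> ` U)) T (inv_into U \<phi>)"
    using homeo_inv_cont[OF hU] tU continuous_map_into_fulltopology by metis
  define F2 where "F2 = (\<lambda>p. f (fst p) (inv_into U \<phi> (snd p)))"
  have c2': "continuous_map (top_of_set ({0..1} \<times> \<phi> ` U)) T' F2"
  proof -
    have s1: "continuous_map (top_of_set ({0..1} \<times> \<phi> ` U)) (top_of_set {0..1}) fst"
      by (auto simp: continuous_map_iff_continuous intro: continuous_intros)
    have s2: "continuous_map (top_of_set ({0..1} \<times> \<phi> ` U)) (top_of_set (\<phi> ` U)) snd"
      by (auto simp: continuous_map_iff_continuous intro: continuous_intros)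
    have "continuous_map (top_of_set ({0..1} \<times> \<phi> ` U))
            (prod_topology (top_of_set {0..1}) T) (\<lambda>p. (fst p, inv_into U \<phi> (snd p)))"
      unfolding continuous_map_pairwise o_def
      using s1 continuous_map_compose[OF s2 invc] by (simp add: o_def) blast
    from continuous_map_compose[OF this cont] show ?thesis
      unfolding F2_def o_def by (simp add: case_prod_beta)
  qed
  have "openin (top_of_set ({0..1} \<times> \<phi> ` U)) {p \<in> {0..1} \<times> \<phi> ` U. F2 p \<in> V}"
    using openin_continuous_map_preimage[OF c2' Vo] by simp
  then obtain E where E: "open E" "{p \<in> {0..1} \<times> \<phi> ` U. F2 p \<in> V} = ({0..1} \<times> \<phi> ` U) \<inter> E"
    unfolding openin_open by blast
  define Wa where "Wa = W \<inter> E \<inter> (UNIV \<times> \<phi> ` U)"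
  have Wao: "open Wa" unfolding Wa_def using W E phiUo by (intro open_Int open_Times) auto
  have inv0: "inv_into U \<phi> (\<phi> x0) = x0" using injU U by simp
  have x0Wa: "(0, \<phi> x0) \<in> Wa"
  proof -
    have "(0, \<phi> x0) \<in> {p \<in> {0..1} \<times> \<phi> ` U. F2 p \<in> V}"
      using U V inv0 by (auto simp: F2_def)
    then show ?thesis using E W U unfolding Wa_def by auto
  qed
  have key: "y \<in> \<phi> ` U \<and> f t (inv_into U \<phi> y) \<in> V \<and> H (t, y) = \<psi> (f t (inv_into U \<phi> y))"
    if "(t, y) \<in> Wa" "t \<in> {0..1}" for t y
  proof -
    have "(t, y) \<in> {p \<in> {0..1} \<times> \<phi> ` U. F2 p \<in> V}"
      using that E unfolding Wa_def by auto
    then have *: "y \<in> \<phi> ` U" "f t (inv_into U \<phi> y) \<in> V" by (auto simp: F2_def)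
    moreover have "(t, y) \<in> W" using that Wa_def by auto
    ultimately show ?thesis using agree that by auto
  qed
  define Ws where "Ws = (\<lambda>y. (0::real, y)) -` Wa"
  have Wso: "open Ws" unfolding Ws_def
    by (rule continuous_open_vimage[OF Wao]) (intro continuous_intros)
  have x0Ws: "\<phi> x0 \<in> Ws" using x0Wa Ws_def by auto
  have dslice: "((\<lambda>y. H (0, y)) has_derivative (\<lambda>v. DH (0, v))) (at (\<phi> x0))"
  proof -
    have "((\<lambda>y. (0::real, y)) has_derivative (\<lambda>v. (0, v))) (at (\<phi> x0))"
      by (intro derivative_eq_intros) auto
    from has_derivative_compose[OF this DH] show ?thesis by simp
  qed
  have "((\<psi> \<circ> f 0 \<circ> inv_into U \<phi>) has_derivative (\<lambda>v. DH (0, v))) (at (\<phi> x0))"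
  proof (rule has_derivative_transform_within_open[OF dslice Wso x0Ws])
    fix y assume "y \<in> Ws"
    then have "(0, y) \<in> Wa" by (simp add: Ws_def)
    then show "H (0, y) = (\<psi> \<circ> f 0 \<circ> inv_into U \<phi>) y" using key[of 0 y] by simp
  qed
  then have "D = (\<lambda>v. DH (0, v))" using D(1) has_derivative_unique by blast
  then have surjS: "surj (\<lambda>v. DH (0, v))" using D(2) by simp
  have linS: "linear (\<lambda>v. DH (0, v))"
  proof (rule linearI)
    fix b1 b2 :: 'm
    show "DH (0, b1 + b2) = DH (0, b1) + DH (0, b2)"
      using linear_add[OF lDH, of "(0, b1)" "(0, b2)"] by simp
  next
    fix r :: real and b :: 'm
    show "DH (0, r *\<^sub>R b) = r *\<^sub>R DH (0, b)"
      using linear_scale[OF lDH, of r "(0, b)"] by simp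
  qed
  obtain R where R: "linear R" "(\<lambda>v. DH (0, v)) \<circ> R = id"
    using real_vector.linear_surjective_right_inverse[OF linS surjS] by blast
  have RR: "DH (0, R z) = z" for z using R(2) by (metis comp_apply id_apply)
  define g' where "g' = (\<lambda>(a::real, b). (a, R (b - DH (a, 0))))"
  have lg': "linear g'"
  proof (rule linearI)
    fix x y :: "real \<times> 'n"
    obtain a b c d where xy: "x = (a, b)" "y = (c, d)" by fastforce
    have 1: "DH (a + c, 0) = DH (a, 0) + DH (c, 0)"
      using linear_add[OF lDH, of "(a, 0)" "(c, 0)"] by simp
    have 2: "b + d - (DH (a, 0) + DH (c, 0)) = (b - DH (a, 0)) + (d - DH (c, 0))" by simp
    have 3: "R (b + d - (DH (a, 0) + DH (c, 0))) = R (b - DH (a, 0)) + R (d - DH (c, 0))"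
      by (subst 2, rule linear_add[OF R(1)])
    show "g' (x + y) = g' x + g' y"
      unfolding xy g'_def using 1 3 by simp
  next
    fix r :: real and x :: "real \<times> 'n"
    obtain a b where xy: "x = (a, b)" by fastforce
    have 1: "DH (r * a, 0) = r *\<^sub>R DH (a, 0)"
      using linear_scale[OF lDH, of r "(a, 0)"] by simp
    have 2: "r *\<^sub>R b - r *\<^sub>R DH (a, 0) = r *\<^sub>R (b - DH (a, 0))" by (simp add: algebra_simps)
    have 3: "R (r *\<^sub>R b - r *\<^sub>R DH (a, 0)) = r *\<^sub>R R (b - DH (a, 0))"
      by (subst 2, rule linear_scale[OF R(1)])
    show "g' (r *\<^sub>R x) = r *\<^sub>R g' x"
      unfolding xy g'_def using 1 3 by simp
  qed
  have blg': "bounded_linear g'" using lg' linear_conv_bounded_linear by blast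
  define G where "G = (\<lambda>p. (fst p, H p))"
  have DG: "(G has_derivative (\<lambda>d. (fst d, DH d))) (at (0, \<phi> x0))"
    unfolding G_def by (rule has_derivative_Pair[OF has_derivative_fst[OF has_derivative_ident] DH])
  have split: "DH (a, c) = DH (a, 0) + DH (0, c)" for a c
  proof -
    have "DH (a, c) = DH ((a, 0) + (0, c))" by simp
    also have "\<dots> = DH (a, 0) + DH (0, c)" using linear_add[OF lDH] by blast
    finally show ?thesis .
  qed
  have comp: "(\<lambda>d. (fst d, DH d)) \<circ> g' = id"
  proof
    fix p :: "real \<times> 'n"
    obtain a b where p: "p = (a, b)" by fastforce
    have "DH (a, R (b - DH (a, 0))) = b"
      using split[of a "R (b - DH (a, 0))"] RR[of "b - DH (a, 0)"] by simp
    then show "((\<lambda>d. (fst d, DH d)) \<circ> g') p = id p" by (simp add: p g'_def)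
  qed
  have Gcont: "continuous_on W G" unfolding G_def
    by (intro continuous_intros Hcont)
  have WaW: "Wa \<subseteq> W" by (auto simp: Wa_def)
  have x0i: "(0, \<phi> x0) \<in> interior Wa" using interior_open[OF Wao] x0Wa by simp
  have "G (0, \<phi> x0) \<in> interior (G ` Wa)"
    by (rule sussmann_open_mapping[OF W(1) Gcont W(2) DG blg' comp WaW x0i])
  moreover have "G (0, \<phi> x0) = (0, \<psi> (f 0 x0))"
    using key[of 0 "\<phi> x0"] x0Wa inv0 by (simp add: G_def)
  ultimately obtain e where e: "e > 0" "ball (0, \<psi> (f 0 x0)) e \<subseteq> G ` Wa"
    unfolding mem_interior by auto
  define Ob where "Ob = {p \<in> V. dist (\<psi> p) (\<psi> (f 0 x0)) < e / 2}"
  have "openin (subtopology T' V) Ob"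
  proof -
    have "continuous_map (subtopology T' V) euclidean \<psi>"
      using homeomorphic_imp_continuous_map[OF hV] continuous_map_into_fulltopology by blast
    from openin_continuous_map_preimage[OF this, of "ball (\<psi> (f 0 x0)) (e/2)"]
    show ?thesis unfolding Ob_def tV by (simp add: dist_commute)
  qed
  then have Obo: "openin T' Ob" using openin_trans_full Vo by blast
  have "Ob \<subseteq> f s ` topspace T" if s: "0 \<le> s" "s < e / 2" "s \<le> 1" for s
  proof
    fix p assume p: "p \<in> Ob"
    have "dist (s, \<psi> p) (0, \<psi> (f 0 x0)) < e"
    proof -
      have "dist (\<psi> p) (\<psi> (f 0 x0)) < e / 2" using p Ob_def by auto
      then have "sqrt ((dist s 0)\<^sup>2 + (dist (\<psi> p) (\<psi> (f 0 x0)))\<^sup>2) < e"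
        using s by (intro sqrt_sum_squares_half_less) auto
      then show ?thesis by (simp add: dist_Pair_Pair)
    qed
    then have "(s, \<psi> p) \<in> G ` Wa" using e by (auto simp: dist_commute)
    then obtain t y where ty: "(t, y) \<in> Wa" "G (t, y) = (s, \<psi> p)" by auto
    then have ts: "t = s" and Hy: "H (t, y) = \<psi> p" by (auto simp: G_def)
    have k: "y \<in> \<phi> ` U" "f s (inv_into U \<phi> y) \<in> V" "H (s, y) = \<psi> (f s (inv_into U \<phi> y))"
      using key[of s y] ty ts s by auto
    have "p \<in> V" using p Ob_def by auto
    then have "p = f s (inv_into U \<phi> y)"
      using injV k Hy ts inj_onD by metis
    moreover have "inv_into U \<phi> y \<in> topspace T"
      using k(1) inv_into_into[of y \<phi> U] Uo openin_subset by blast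
    ultimately show "p \<in> f s ` topspace T" by blast
  qed
  moreover have "f 0 x0 \<in> Ob" using V e Ob_def by auto
  ultimately show ?thesis using Obo e by (intro exI[of _ "e/2"]) auto
qed

theorem mainTheorem6:
  fixes T :: "'a topology" and A :: "('a set \<times> ('a \<Rightarrow> 'm::euclidean_space)) set"
    and T' :: "'b topology" and B :: "('b set \<times> ('b \<Rightarrow> 'n::euclidean_space)) set"
    and f :: "real \<Rightarrow> 'a \<Rightarrow> 'b" and K :: "'a set"
  assumes "smooth_manifold T A" and "smooth_manifold T' B"
    and "smooth_homotopy T A T' B f"
    and "\<forall>s \<in> {0..1}. submersion T A T' B (f s)"
    and "compactin T K"
    and "\<forall>s \<in> {0..1}. \<forall>x \<in> topspace T - K. f s x = f 0 x"
  shows "\<exists>\<epsilon>>0. \<epsilon> \<le> 1 \<and> (\<forall>s \<in> {0..\<epsilon>}. f s ` topspace T = f 0 ` topspace T)"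
proof -
  have sub0: "submersion T A T' B (f 0)" using assms(4) by simp
  have loc: "\<exists>r>0. \<exists>Ob. openin T' Ob \<and> f 0 x \<in> Ob \<and>
           (\<forall>s. 0 \<le> s \<and> s < r \<and> s \<le> 1 \<longrightarrow> Ob \<subseteq> f s ` topspace T)"
    if "x \<in> topspace T" for x
    using local_open[OF assms(1,2,3) sub0 that] .
  have open0: "openin T' (f 0 ` topspace T)"
    unfolding openin_subopen[of T' "f 0 ` topspace T"]
  proof
    fix z assume "z \<in> f 0 ` topspace T"
    then obtain x where x: "x \<in> topspace T" "z = f 0 x" by blast
    obtain r Ob where "r > 0" "openin T' Ob" "f 0 x \<in> Ob"
      "\<forall>s. 0 \<le> s \<and> s < r \<and> s \<le> 1 \<longrightarrow> Ob \<subseteq> f s ` topspace T"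
      using loc[OF x(1)] by blast
    then show "\<exists>Z. openin T' Z \<and> z \<in> Z \<and> Z \<subseteq> f 0 ` topspace T" using x by force
  qed
  have cont: "continuous_map (prod_topology (top_of_set {0..1}) T) T' (\<lambda>(s, x). f s x)"
    using assms(3) unfolding smooth_homotopy_def by blast
  have cont0: "continuous_map T T' (f 0)"
  proof -
    have "continuous_map T (prod_topology (top_of_set {0..1}) T) (\<lambda>x. (0::real, x))"
      unfolding continuous_map_pairwise o_def by auto
    from continuous_map_compose[OF this cont] show ?thesis by (simp add: o_def)
  qed
  define Pre where "Pre = {p \<in> topspace (prod_topology (top_of_set {0..1}) T).
                           (\<lambda>(s, x). f s x) p \<in> f 0 ` topspace T}"
  have Preo: "openin (prod_topology (top_of_set {0..1}) T) Pre"
    unfolding Pre_def by (rule openin_continuous_map_preimage[OF cont open0])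
  have Ksub: "K \<subseteq> topspace T" using assms(5) compactin_subset_topspace by blast
  have "\<exists>e>0. \<forall>s. 0 \<le> s \<and> s < e \<longrightarrow> (\<forall>y\<in>K. s \<le> 1 \<longrightarrow>
          f s y \<in> f 0 ` topspace T \<and> f 0 y \<in> f s ` topspace T)"
  proof (rule compact_uniform[OF assms(5)])
    fix x assume xK: "x \<in> K"
    then have xT: "x \<in> topspace T" using Ksub by blast
    then have P0: "(0, x) \<in> Pre" unfolding Pre_def by auto
    obtain U1 V1 where UV: "openin (top_of_set {0..1}) U1" "openin T V1" "0 \<in> U1" "x \<in> V1"
      "U1 \<times> V1 \<subseteq> Pre"
      using Preo[unfolded openin_prod_topology_alt, rule_format, OF P0] by blast
    obtain E1 where E1: "open E1" "U1 = {0..1} \<inter> E1" using UV(1) openin_open by blast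
    have "0 \<in> E1" using UV(3) E1(2) by blast
    then obtain d where d: "d > 0" "ball 0 d \<subseteq> E1"
      using open_contains_ball[THEN iffD1, OF E1(1)] by blast
    obtain r Ob where rOb: "r > 0" "openin T' Ob" "f 0 x \<in> Ob"
      "\<forall>s. 0 \<le> s \<and> s < r \<and> s \<le> 1 \<longrightarrow> Ob \<subseteq> f s ` topspace T"
      using loc[OF xT] by blast
    define N1 where "N1 = {y \<in> topspace T. f 0 y \<in> Ob}"
    have N1o: "openin T N1" unfolding N1_def by (rule openin_continuous_map_preimage[OF cont0 rOb(2)])
    show "\<exists>N d. openin T N \<and> x \<in> N \<and> d > 0 \<and> (\<forall>s. 0 \<le> s \<and> s < d \<longrightarrow> (\<forall>y\<in>N. s \<le> 1 \<longrightarrow>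
          f s y \<in> f 0 ` topspace T \<and> f 0 y \<in> f s ` topspace T))"
    proof (intro exI conjI allI impI ballI)
      show "openin T (V1 \<inter> N1)" using UV(2) N1o by blast
      show "x \<in> V1 \<inter> N1" using UV(4) xT rOb(3) N1_def by auto
      show "min d r > 0" using d rOb by simp
      fix s y assume s: "0 \<le> s \<and> s < min d r" and y: "y \<in> V1 \<inter> N1" and s1: "s \<le> 1"
      have "s \<in> ball 0 d" using s by (simp add: dist_real_def)
      then have "s \<in> E1" using d(2) by blast
      then have "s \<in> U1" using E1(2) s s1 by simp
      then have "(s, y) \<in> U1 \<times> V1" using y by blast
      then have "(s, y) \<in> Pre" using UV(5) by blast
      then show "f s y \<in> f 0 ` topspace T" unfolding Pre_def by simp
      have "Ob \<subseteq> f s ` topspace T" using rOb(4) s s1 by simp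
      moreover have "f 0 y \<in> Ob" using y N1_def by simp
      ultimately show "f 0 y \<in> f s ` topspace T" by blast
    qed
  qed
  then obtain e where e: "e > 0" and eQ0: "\<forall>s. 0 \<le> s \<and> s < e \<longrightarrow> (\<forall>y\<in>K. s \<le> 1 \<longrightarrow>
          f s y \<in> f 0 ` topspace T \<and> f 0 y \<in> f s ` topspace T)"
    by blast
  have eQ: "f s y \<in> f 0 ` topspace T \<and> f 0 y \<in> f s ` topspace T"
    if "0 \<le> s" "s < e" "y \<in> K" "s \<le> 1" for s y
    using eQ0 that by blast
  show ?thesis
  proof (intro exI conjI ballI)
    show "min (e/2) 1 > 0" "min (e/2) 1 \<le> 1" using e by auto
    fix s assume s: "s \<in> {0..min (e/2) 1}"
    then have s0: "0 \<le> s" "s < e" "s \<le> 1" using e by auto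
    show "f s ` topspace T = f 0 ` topspace T"
    proof
      show "f s ` topspace T \<subseteq> f 0 ` topspace T"
      proof
        fix z assume "z \<in> f s ` topspace T"
        then obtain y where y: "y \<in> topspace T" "z = f s y" by blast
        show "z \<in> f 0 ` topspace T"
        proof (cases "y \<in> K")
          case True then show ?thesis using eQ[OF s0(1,2) True s0(3)] y by blast
        next
          case False
          then have "f s y = f 0 y" using assms(6)[rule_format, of s y] s0 y by simp
          then show ?thesis using y by (metis image_eqI)
        qed
      qed
    next
      show "f 0 ` topspace T \<subseteq> f s ` topspace T"
      proof
        fix z assume "z \<in> f 0 ` topspace T"
        then obtain y where y: "y \<in> topspace T" "z = f 0 y" by blast
        show "z \<in> f s ` topspace T"
        proof (cases "y \<in> K")
          case True then show ?thesis using eQ[OF s0(1,2) True s0(3)] y by blast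
        next
          case False then have "f s y = f 0 y" using assms(6)[rule_format, of s y] s0 y by simp
          then show ?thesis using y by (metis image_eqI)
        qed
      qed
    qed
  qed
qed

end
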